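(* Let $\mathfrak g$ be a semisimple Lie algebra over an algebraically closed field of characteristic $0$, $\sigma_1\ne\sigma_2$ commuting involutions of $\mathfrak g$, and $\mathfrak g_{ij}=\{x:\sigma_1(x)=(-1)^ix,\ \sigma_2(x)=(-1)^jx\}$ for $i,j\in\{0,1\}$. Put $\mathfrak m_{ij}=[\mathfrak g_{ij},\mathfrak g_{ij}]\subset\mathfrak g_{00}$ and let $\kappa$ be the Killing form of $\mathfrak g$. Suppose $\mathfrak g_{11}=0$. Then (i) $[\mathfrak m_{01},\mathfrak g_{10}]=[\mathfrak m_{10},\mathfrak g_{01}]=0$; (ii) $\kappa(\mathfrak m_{01},\mathfrak m_{10})=0$ and $\mathfrak m_{01}\cap\mathfrak m_{10}=\{0\}$; (iii) $\mathfrak m_{10}\oplus\mathfrak g_{10}$ and $\mathfrak m_{01}\oplus\mathfrak g_{01}$ are ideals of $\mathfrak g$ with zero intersection.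
   Context: $\mathfrak g=\operatorname{Lie}(G)$ with $G$ connected semisimple; involutions induced from $G$. *)

theory Defs
  imports Main "HOL-Computational_Algebra.Polynomial"
begin

definition alg_closed :: "'k::field itself \<Rightarrow> bool" where
  "alg_closed _ \<longleftrightarrow> (\<forall>p :: 'k poly. degree p > 0 \<longrightarrow> (\<exists>x. poly p x = 0))"

definition lie_algebra :: "('k::field \<Rightarrow> 'v::ab_group_add \<Rightarrow> 'v) \<Rightarrow> ('v \<Rightarrow> 'v \<Rightarrow> 'v) \<Rightarrow> bool" where
  "lie_algebra scale br \<longleftrightarrow>
     vector_space scale \<and>
     (\<forall>x y z. br (x + y) z = br x z + br y z) \<and>
     (\<forall>x y z. br x (y + z) = br x y + br x z) \<and>
     (\<forall>c x y. br (scale c x) y = scale c (br x y)) \<and>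
     (\<forall>c x y. br x (scale c y) = scale c (br x y)) \<and>
     (\<forall>x. br x x = 0) \<and>
     (\<forall>x y z. br x (br y z) + br y (br z x) + br z (br x y) = 0)"

definition fin_basis :: "('k::field \<Rightarrow> 'v::ab_group_add \<Rightarrow> 'v) \<Rightarrow> 'v set \<Rightarrow> bool" where
  "fin_basis scale B \<longleftrightarrow> finite B \<and> \<not> module.dependent scale B \<and> module.span scale B = UNIV"

definition finite_dim :: "('k::field \<Rightarrow> 'v::ab_group_add \<Rightarrow> 'v) \<Rightarrow> bool" where
  "finite_dim scale \<longleftrightarrow> (\<exists>B. fin_basis scale B)"

definition trace_lin :: "('k::field \<Rightarrow> 'v::ab_group_add \<Rightarrow> 'v) \<Rightarrow> ('v \<Rightarrow> 'v) \<Rightarrow> 'k" where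
  "trace_lin scale f = (let B = (SOME B. fin_basis scale B) in
      \<Sum>b\<in>B. module.representation scale B (f b) b)"

definition killing :: "('k::field \<Rightarrow> 'v::ab_group_add \<Rightarrow> 'v) \<Rightarrow> ('v \<Rightarrow> 'v \<Rightarrow> 'v) \<Rightarrow> 'v \<Rightarrow> 'v \<Rightarrow> 'k" where
  "killing scale br x y = trace_lin scale (\<lambda>z. br x (br y z))"

definition brk_set :: "('k::field \<Rightarrow> 'v::ab_group_add \<Rightarrow> 'v) \<Rightarrow> ('v \<Rightarrow> 'v \<Rightarrow> 'v) \<Rightarrow> 'v set \<Rightarrow> 'v set \<Rightarrow> 'v set" where
  "brk_set scale br A B = module.span scale {br a b | a b. a \<in> A \<and> b \<in> B}"

definition lie_ideal :: "('k::field \<Rightarrow> 'v::ab_group_add \<Rightarrow> 'v) \<Rightarrow> ('v \<Rightarrow> 'v \<Rightarrow> 'v) \<Rightarrow> 'v set \<Rightarrow> bool" where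
  "lie_ideal scale br I \<longleftrightarrow> module.subspace scale I \<and> (\<forall>x i. i \<in> I \<longrightarrow> br x i \<in> I)"

fun derived :: "('k::field \<Rightarrow> 'v::ab_group_add \<Rightarrow> 'v) \<Rightarrow> ('v \<Rightarrow> 'v \<Rightarrow> 'v) \<Rightarrow> 'v set \<Rightarrow> nat \<Rightarrow> 'v set" where
  "derived scale br I 0 = I"
| "derived scale br I (Suc n) = brk_set scale br (derived scale br I n) (derived scale br I n)"

definition solvable_set :: "('k::field \<Rightarrow> 'v::ab_group_add \<Rightarrow> 'v) \<Rightarrow> ('v \<Rightarrow> 'v \<Rightarrow> 'v) \<Rightarrow> 'v set \<Rightarrow> bool" where
  "solvable_set scale br I \<longleftrightarrow> (\<exists>n. derived scale br I n = {0})"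

definition semisimple :: "('k::field \<Rightarrow> 'v::ab_group_add \<Rightarrow> 'v) \<Rightarrow> ('v \<Rightarrow> 'v \<Rightarrow> 'v) \<Rightarrow> bool" where
  "semisimple scale br \<longleftrightarrow> lie_algebra scale br \<and> finite_dim scale \<and>
     (\<forall>I. lie_ideal scale br I \<and> solvable_set scale br I \<longrightarrow> I = {0})"

definition lie_involution :: "('k::field \<Rightarrow> 'v::ab_group_add \<Rightarrow> 'v) \<Rightarrow> ('v \<Rightarrow> 'v \<Rightarrow> 'v) \<Rightarrow> ('v \<Rightarrow> 'v) \<Rightarrow> bool" where
  "lie_involution scale br \<sigma> \<longleftrightarrow> Vector_Spaces.linear scale scale \<sigma> \<and>
     (\<forall>x y. \<sigma> (br x y) = br (\<sigma> x) (\<sigma> y)) \<and> (\<forall>x. \<sigma> (\<sigma> x) = x)"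

definition gij :: "('v::ab_group_add \<Rightarrow> 'v) \<Rightarrow> ('v \<Rightarrow> 'v) \<Rightarrow> nat \<Rightarrow> nat \<Rightarrow> 'v set" where
  "gij \<sigma>1 \<sigma>2 i j = {x. \<sigma>1 x = (if i = 0 then x else - x) \<and> \<sigma>2 x = (if j = 0 then x else - x)}"

end

theory Submission
  imports Defs
begin

locale LS =
  fixes scale :: "'k::field_char_0 \<Rightarrow> 'v::ab_group_add \<Rightarrow> 'v"
    and br :: "'v \<Rightarrow> 'v \<Rightarrow> 'v"
    and \<sigma>1 \<sigma>2 :: "'v \<Rightarrow> 'v"
  assumes lie: "lie_algebra scale br"
    and inv1: "lie_involution scale br \<sigma>1" and inv2: "lie_involution scale br \<sigma>2"
    and comm: "\<sigma>1 \<circ> \<sigma>2 = \<sigma>2 \<circ> \<sigma>1"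
    and g11: "gij \<sigma>1 \<sigma>2 1 1 = {0}"
begin

sublocale V: vector_space scale
  using lie unfolding lie_algebra_def by blast

lemma br_add_l: "br (x + y) z = br x z + br y z"
  and br_add_r: "br x (y + z) = br x y + br x z"
  and br_scale_l: "br (scale c x) y = scale c (br x y)"
  and br_scale_r: "br x (scale c y) = scale c (br x y)"
  and br_self: "br x x = 0"
  and jacobi: "br x (br y z) + br y (br z x) + br z (br x y) = 0"
  using lie unfolding lie_algebra_def by blast+

lemma br_0_l[simp]: "br 0 y = 0"
  using br_add_l[of 0 0 y] by simp
lemma br_0_r[simp]: "br x 0 = 0"
  using br_add_r[of x 0 0] by simp
lemma br_neg_l[simp]: "br (- x) y = - br x y"
  using br_add_l[of x "-x" y] by (simp add: eq_neg_iff_add_eq_0 add.commute)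
lemma br_neg_r[simp]: "br x (- y) = - br x y"
  using br_add_r[of x y "-y"] by (simp add: eq_neg_iff_add_eq_0 add.commute)
lemma br_anti: "br x y = - br y x"
proof -
  have "0 = br (x+y) (x+y)" by (simp add: br_self)
  also have "\<dots> = br x y + br y x" unfolding br_add_l br_add_r by (simp add: br_self)
  finally show ?thesis by (simp add: eq_neg_iff_add_eq_0)
qed

lemma lin1: "\<sigma>1 (x + y) = \<sigma>1 x + \<sigma>1 y" "\<sigma>1 (scale c x) = scale c (\<sigma>1 x)"
  "\<sigma>1 (br x y) = br (\<sigma>1 x) (\<sigma>1 y)" "\<sigma>1 (\<sigma>1 x) = x"
  using inv1 unfolding lie_involution_def Vector_Spaces.linear_def module_hom_def
    module_hom_axioms_def by auto
lemma lin2: "\<sigma>2 (x + y) = \<sigma>2 x + \<sigma>2 y" "\<sigma>2 (scale c x) = scale c (\<sigma>2 x)"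
  "\<sigma>2 (br x y) = br (\<sigma>2 x) (\<sigma>2 y)" "\<sigma>2 (\<sigma>2 x) = x"
  using inv2 unfolding lie_involution_def Vector_Spaces.linear_def module_hom_def
    module_hom_axioms_def by auto
lemma comm': "\<sigma>1 (\<sigma>2 x) = \<sigma>2 (\<sigma>1 x)"
  using comm by (metis comp_apply)

lemma s1_0[simp]: "\<sigma>1 0 = 0" using lin1(1)[of 0 0] by simp
lemma s2_0[simp]: "\<sigma>2 0 = 0" using lin2(1)[of 0 0] by simp
lemma s1_neg[simp]: "\<sigma>1 (- x) = - \<sigma>1 x" using lin1(1)[of x "-x"] by (simp add: eq_neg_iff_add_eq_0 add.commute)
lemma s2_neg[simp]: "\<sigma>2 (- x) = - \<sigma>2 x" using lin2(1)[of x "-x"] by (simp add: eq_neg_iff_add_eq_0 add.commute)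

lemma double0: "x + x = 0 \<Longrightarrow> x = (0::'v)"
proof -
  assume "x + x = 0"
  then have "scale (1/2) (x + x) = 0" by simp
  moreover have "scale (1/2) (x + x) = scale (1/2 + 1/2) x"
    by (simp only: V.scale_right_distrib V.scale_left_distrib)
  ultimately show ?thesis by simp
qed

lemma negeq0: "x = - x \<Longrightarrow> x = (0::'v)"
  using double0 by (metis eq_neg_iff_add_eq_0)

abbreviation G where "G i j \<equiv> gij \<sigma>1 \<sigma>2 i j"

lemma G_sub: "V.subspace (G i j)"
  unfolding V.subspace_def gij_def by (auto simp: lin1 lin2)

lemma half: "scale (1/2) (x + x) = x"
proof -
  have "scale (1/2) (x + x) = scale (1/2 + 1/2) x"
    by (simp only: V.scale_right_distrib V.scale_left_distrib)
  then show ?thesis by simp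
qed

lemma invf:
  assumes "lie_involution scale br \<tau>"
  shows "\<tau> (x + y) = \<tau> x + \<tau> y" "\<tau> (scale c x) = scale c (\<tau> x)"
    "\<tau> (\<tau> x) = x" "\<tau> (- x) = - \<tau> x" "\<tau> (x - y) = \<tau> x - \<tau> y"
proof -
  show a: "\<tau> (x + y) = \<tau> x + \<tau> y" "\<tau> (scale c x) = scale c (\<tau> x)" "\<tau> (\<tau> x) = x"
    for x y c
    using assms unfolding lie_involution_def Vector_Spaces.linear_def module_hom_def
    module_hom_axioms_def by auto
  show b: "\<tau> (- x) = - \<tau> x" for x
    using a(1)[of x "-x"] a(2)[of 0 x] by (simp add: eq_neg_iff_add_eq_0 add.commute)
  show "\<tau> (x - y) = \<tau> x - \<tau> y"
    using a(1)[of x "-y"] b[of y] by simp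
qed

lemma split_inv:
  assumes "lie_involution scale br \<tau>"
  shows "\<tau> (scale (1/2) (x + \<tau> x)) = scale (1/2) (x + \<tau> x)"
    "\<tau> (scale (1/2) (x - \<tau> x)) = - scale (1/2) (x - \<tau> x)"
    "x = scale (1/2) (x + \<tau> x) + scale (1/2) (x - \<tau> x)"
proof -
  note f = invf[OF assms]
  show "\<tau> (scale (1/2) (x + \<tau> x)) = scale (1/2) (x + \<tau> x)"
    by (simp add: f add.commute)
  have "\<tau> (scale (1/2) (x - \<tau> x)) = scale (1/2) (\<tau> x - x)" by (simp add: f)
  also have "\<tau> x - x = - (x - \<tau> x)" by simp
  finally show "\<tau> (scale (1/2) (x - \<tau> x)) = - scale (1/2) (x - \<tau> x)"
    by (simp only: V.scale_minus_right)
  have "scale (1/2) (x + \<tau> x) + scale (1/2) (x - \<tau> x) = scale (1/2) ((x + \<tau> x) + (x - \<tau> x))"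
    by (simp only: V.scale_right_distrib)
  also have "(x + \<tau> x) + (x - \<tau> x) = x + x" by simp
  finally show "x = scale (1/2) (x + \<tau> x) + scale (1/2) (x - \<tau> x)" by (simp add: half)
qed

lemma comm_pres:
  assumes "lie_involution scale br \<tau>" "lie_involution scale br \<rho>"
    and c: "\<And>y. \<rho> (\<tau> y) = \<tau> (\<rho> y)"
  shows "\<rho> x = x \<Longrightarrow> \<rho> (scale (1/2) (x + \<tau> x)) = scale (1/2) (x + \<tau> x)"
    "\<rho> x = x \<Longrightarrow> \<rho> (scale (1/2) (x - \<tau> x)) = scale (1/2) (x - \<tau> x)"
    "\<rho> x = - x \<Longrightarrow> \<rho> (scale (1/2) (x + \<tau> x)) = - scale (1/2) (x + \<tau> x)"
    "\<rho> x = - x \<Longrightarrow> \<rho> (scale (1/2) (x - \<tau> x)) = - scale (1/2) (x - \<tau> x)"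
proof -
  note f = invf[OF assms(1)] and g = invf[OF assms(2)]
  have A: "\<rho> (scale (1/2) (x + \<tau> x)) = scale (1/2) (\<rho> x + \<tau> (\<rho> x))"
    by (simp only: g(1,2) c)
  have B: "\<rho> (scale (1/2) (x - \<tau> x)) = scale (1/2) (\<rho> x - \<tau> (\<rho> x))"
    by (simp only: g(2,5) c)
  show "\<rho> x = x \<Longrightarrow> \<rho> (scale (1/2) (x + \<tau> x)) = scale (1/2) (x + \<tau> x)"
    using A by simp
  show "\<rho> x = x \<Longrightarrow> \<rho> (scale (1/2) (x - \<tau> x)) = scale (1/2) (x - \<tau> x)"
    using B by simp
  show "\<rho> x = - x \<Longrightarrow> \<rho> (scale (1/2) (x + \<tau> x)) = - scale (1/2) (x + \<tau> x)"
  proof -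
    assume h: "\<rho> x = - x"
    have "- x + \<tau> (- x) = - (x + \<tau> x)" by (simp add: f(4))
    then show ?thesis using A h by (simp only: V.scale_minus_right)
  qed
  show "\<rho> x = - x \<Longrightarrow> \<rho> (scale (1/2) (x - \<tau> x)) = - scale (1/2) (x - \<tau> x)"
  proof -
    assume h: "\<rho> x = - x"
    have "- x - \<tau> (- x) = - (x - \<tau> x)" by (simp add: f(4))
    then show ?thesis using B h by (simp only: V.scale_minus_right)
  qed
qed

lemma decomp: "\<exists>a b c. x = a + b + c \<and> a \<in> G 0 0 \<and> b \<in> G 0 1 \<and> c \<in> G 1 0"
proof -
  define e where "e = scale (1/2) (x + \<sigma>1 x)"
  define od where "od = scale (1/2) (x - \<sigma>1 x)"
  have xe: "x = e + od" unfolding e_def od_def by (rule split_inv[OF inv1])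
  have e1: "\<sigma>1 e = e" unfolding e_def by (rule split_inv[OF inv1])
  have o1: "\<sigma>1 od = - od" unfolding od_def by (rule split_inv[OF inv1])
  define e0 where "e0 = scale (1/2) (e + \<sigma>2 e)"
  define e1' where "e1' = scale (1/2) (e - \<sigma>2 e)"
  define o0 where "o0 = scale (1/2) (od + \<sigma>2 od)"
  define o1' where "o1' = scale (1/2) (od - \<sigma>2 od)"
  have c: "\<And>y. \<sigma>1 (\<sigma>2 y) = \<sigma>2 (\<sigma>1 y)" by (rule comm')
  have "e0 \<in> G 0 0" unfolding gij_def e0_def
    using split_inv(1,2)[OF inv2] comm_pres[OF inv2 inv1 c] e1 by simp
  moreover have "e1' \<in> G 0 1" unfolding gij_def e1'_def
    using split_inv(1,2)[OF inv2] comm_pres[OF inv2 inv1 c] e1 by simp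
  moreover have "o0 \<in> G 1 0" unfolding gij_def o0_def
    using split_inv(1,2)[OF inv2] comm_pres[OF inv2 inv1 c] o1 by simp
  moreover have "o1' \<in> G 1 1" unfolding gij_def o1'_def
    using split_inv(1,2)[OF inv2] comm_pres[OF inv2 inv1 c] o1 by simp
  then have "o1' = 0" using g11 by simp
  moreover have "x = e0 + e1' + o0 + o1'"
    using xe split_inv(3)[OF inv2, of e] split_inv(3)[OF inv2, of od]
    unfolding e0_def e1'_def o0_def o1'_def by (simp add: add.assoc)
  ultimately show ?thesis by auto
qed

lemma br_G: "x \<in> G i j \<Longrightarrow> y \<in> G k l \<Longrightarrow>
   br x y \<in> G (if (i=0)=(k=0) then 0 else 1) (if (j=0)=(l=0) then 0 else 1)"
  unfolding gij_def by (auto simp: lin1 lin2)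

lemma G00_G10: "x \<in> G 0 0 \<Longrightarrow> x \<in> G 1 0 \<Longrightarrow> x = 0"
  unfolding gij_def using negeq0 by auto
lemma G00_G01: "x \<in> G 0 0 \<Longrightarrow> x \<in> G 0 1 \<Longrightarrow> x = 0"
  unfolding gij_def using negeq0 by auto

lemma G01_G10: "x \<in> G 0 1 \<Longrightarrow> y \<in> G 1 0 \<Longrightarrow> br x y = 0"
  using br_G[of x 0 1 y 1 0] g11 by auto
lemma G10_G01: "x \<in> G 1 0 \<Longrightarrow> y \<in> G 0 1 \<Longrightarrow> br x y = 0"
  using br_G[of x 1 0 y 0 1] g11 by auto

lemma span_br_l:
  assumes "x \<in> V.span S" "V.subspace W" "\<And>s. s \<in> S \<Longrightarrow> br s y \<in> W"
  shows "br x y \<in> W"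
proof -
  have "V.subspace {x. br x y \<in> W}"
    using assms(2) unfolding V.subspace_def by (auto simp: br_add_l br_scale_l)
  then have "V.span S \<subseteq> {x. br x y \<in> W}"
    using assms(3) by (intro V.span_minimal) auto
  then show ?thesis using assms(1) by auto
qed

lemma span_br_r:
  assumes "x \<in> V.span S" "V.subspace W" "\<And>s. s \<in> S \<Longrightarrow> br y s \<in> W"
  shows "br y x \<in> W"
proof -
  have "V.subspace {x. br y x \<in> W}"
    using assms(2) unfolding V.subspace_def by (auto simp: br_add_r br_scale_r)
  then have "V.span S \<subseteq> {x. br y x \<in> W}"
    using assms(3) by (intro V.span_minimal) auto
  then show ?thesis using assms(1) by auto
qed

abbreviation M where "M i j \<equiv> brk_set scale br (G i j) (G i j)"

lemma M_sub: "V.subspace (M i j)"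
  unfolding brk_set_def by simp

lemma M_G00: "(i = 0 \<and> j = 1) \<or> (i = 1 \<and> j = 0) \<Longrightarrow> M i j \<subseteq> G 0 0"
  unfolding brk_set_def
  apply (rule V.span_minimal)
  using br_G[of _ i j _ i j] G_sub by auto

lemma jac2: "br x (br c d) = br c (br x d) - br d (br x c)"
proof -
  have "br x (br c d) + br c (br d x) + br d (br x c) = 0" by (rule jacobi)
  then show ?thesis
    using br_anti[of d x] by (simp add: eq_neg_iff_add_eq_0 algebra_simps)
qed

lemma M01_G10: "a \<in> M 0 1 \<Longrightarrow> b \<in> G 1 0 \<Longrightarrow> br a b = 0"
proof -
  assume a: "a \<in> M 0 1" and b: "b \<in> G 1 0"
  have "br a b \<in> {0}"
  proof (rule span_br_l[where W="{0}"])
    show "a \<in> V.span {br a b |a b. a \<in> G 0 1 \<and> b \<in> G 0 1}"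
      using a unfolding brk_set_def .
    fix s assume "s \<in> {br a b |a b. a \<in> G 0 1 \<and> b \<in> G 0 1}"
    then obtain c d where s: "s = br c d" "c \<in> G 0 1" "d \<in> G 0 1" by blast
    have "br b s = 0" using s jac2[of b c d] G10_G01 b by simp
    then show "br s b \<in> {0}" using br_anti[of s b] by simp
  qed simp
  then show ?thesis by simp
qed

lemma M10_G01: "a \<in> M 1 0 \<Longrightarrow> b \<in> G 0 1 \<Longrightarrow> br a b = 0"
proof -
  assume a: "a \<in> M 1 0" and b: "b \<in> G 0 1"
  have "br a b \<in> {0}"
  proof (rule span_br_l[where W="{0}"])
    show "a \<in> V.span {br a b |a b. a \<in> G 1 0 \<and> b \<in> G 1 0}"
      using a unfolding brk_set_def .
    fix s assume "s \<in> {br a b |a b. a \<in> G 1 0 \<and> b \<in> G 1 0}"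
    then obtain c d where s: "s = br c d" "c \<in> G 1 0" "d \<in> G 1 0" by blast
    have "br b s = 0" using s jac2[of b c d] G01_G10 b by simp
    then show "br s b \<in> {0}" using br_anti[of s b] by simp
  qed simp
  then show ?thesis by simp
qed

lemma G00_G: "(i = 0 \<and> j = 1) \<or> (i = 1 \<and> j = 0) \<Longrightarrow> x \<in> G 0 0 \<Longrightarrow> y \<in> G i j \<Longrightarrow> br x y \<in> G i j"
  using br_G[of x 0 0 y i j] by auto

lemma G00_M: "(i = 0 \<and> j = 1) \<or> (i = 1 \<and> j = 0) \<Longrightarrow> x \<in> G 0 0 \<Longrightarrow> a \<in> M i j \<Longrightarrow> br x a \<in> M i j"
proof -
  assume ij: "(i = 0 \<and> j = 1) \<or> (i = 1 \<and> j = 0)" and x: "x \<in> G 0 0" and a: "a \<in> M i j"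
  show ?thesis unfolding brk_set_def
  proof (rule span_br_r)
    show "a \<in> V.span {br a b |a b. a \<in> G i j \<and> b \<in> G i j}"
      using a unfolding brk_set_def .
    show "V.subspace (V.span {br a b |a b. a \<in> G i j \<and> b \<in> G i j})" by simp
    fix s assume "s \<in> {br a b |a b. a \<in> G i j \<and> b \<in> G i j}"
    then obtain c d where s: "s = br c d" "c \<in> G i j" "d \<in> G i j" by blast
    have "br c (br x d) \<in> V.span {br a b |a b. a \<in> G i j \<and> b \<in> G i j}"
      using s G00_G[OF ij x] by (intro V.span_base) blast
    moreover have "br d (br x c) \<in> V.span {br a b |a b. a \<in> G i j \<and> b \<in> G i j}"
      using s G00_G[OF ij x] by (intro V.span_base) blast
    ultimately show "br x s \<in> V.span {br a b |a b. a \<in> G i j \<and> b \<in> G i j}"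
      using s jac2[of x c d] by (simp add: V.span_diff)
  qed
qed

lemma M01_M10: "a \<in> M 0 1 \<Longrightarrow> b \<in> M 1 0 \<Longrightarrow> br a b = 0"
proof -
  assume a: "a \<in> M 0 1" and b: "b \<in> M 1 0"
  have "br a b \<in> {0}"
  proof (rule span_br_r[where W="{0}"])
    show "b \<in> V.span {br a b |a b. a \<in> G 1 0 \<and> b \<in> G 1 0}"
      using b unfolding brk_set_def .
    fix s assume "s \<in> {br a b |a b. a \<in> G 1 0 \<and> b \<in> G 1 0}"
    then obtain c d where s: "s = br c d" "c \<in> G 1 0" "d \<in> G 1 0" by blast
    show "br a s \<in> {0}" using s jac2[of a c d] M01_G10 a by simp
  qed simp
  then show ?thesis by simp
qed

lemma I10_ideal: "lie_ideal scale br {a + b | a b. a \<in> M 1 0 \<and> b \<in> G 1 0}"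
  unfolding lie_ideal_def
proof (intro conjI allI impI)
  show "V.subspace {a + b | a b. a \<in> M 1 0 \<and> b \<in> G 1 0}"
  proof (rule V.subspaceI)
    show "0 \<in> {a + b | a b. a \<in> M 1 0 \<and> b \<in> G 1 0}"
      using V.subspace_0[OF M_sub] V.subspace_0[OF G_sub] by force
    fix x y assume "x \<in> {a + b | a b. a \<in> M 1 0 \<and> b \<in> G 1 0}" "y \<in> {a + b | a b. a \<in> M 1 0 \<and> b \<in> G 1 0}"
    then obtain a b a' b' where "x = a + b" "y = a' + b'" "a \<in> M 1 0" "b \<in> G 1 0" "a' \<in> M 1 0" "b' \<in> G 1 0"
      by blast
    then show "x + y \<in> {a + b | a b. a \<in> M 1 0 \<and> b \<in> G 1 0}"
      using V.subspace_add[OF M_sub] V.subspace_add[OF G_sub]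
      by (intro CollectI exI[of _ "a + a'"] exI[of _ "b + b'"]) (simp add: ac_simps)
  next
    fix c x assume "x \<in> {a + b | a b. a \<in> M 1 0 \<and> b \<in> G 1 0}"
    then obtain a b where "x = a + b" "a \<in> M 1 0" "b \<in> G 1 0" by blast
    then show "scale c x \<in> {a + b | a b. a \<in> M 1 0 \<and> b \<in> G 1 0}"
      using V.subspace_scale[OF M_sub] V.subspace_scale[OF G_sub]
      by (intro CollectI exI[of _ "scale c a"] exI[of _ "scale c b"]) (simp add: V.scale_right_distrib)
  qed
next
  fix x i assume "i \<in> {a + b | a b. a \<in> M 1 0 \<and> b \<in> G 1 0}"
  then obtain a b where i: "i = a + b" and a: "a \<in> M 1 0" and b: "b \<in> G 1 0" by blast
  obtain p q r where x: "x = p + q + r" and p: "p \<in> G 0 0" and q: "q \<in> G 0 1" and r: "r \<in> G 1 0"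
    using decomp by blast
  have a0: "a \<in> G 0 0" using M_G00[of 1 0] a by auto
  have 1: "br p a \<in> M 1 0" using G00_M[of 1 0] p a by simp
  have 2: "br p b \<in> G 1 0" using G00_G[of 1 0] p b by simp
  have 3: "br q a = 0" using M10_G01[OF a q] br_anti[of q a] by simp
  have 4: "br q b = 0" using G01_G10[OF q b] .
  have 5: "br r a \<in> G 1 0" using br_G[OF r a0] by simp
  have 6: "br r b \<in> M 1 0" unfolding brk_set_def using r b by (intro V.span_base) blast
  have "br x i = (br p a + br r b) + (br p b + br r a)"
    unfolding x i br_add_l br_add_r 3 4 by (simp add: ac_simps)
  moreover have "br p a + br r b \<in> M 1 0" using 1 6 V.subspace_add[OF M_sub] by blast
  moreover have "br p b + br r a \<in> G 1 0" using 2 5 V.subspace_add[OF G_sub] by blast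
  ultimately show "br x i \<in> {a + b | a b. a \<in> M 1 0 \<and> b \<in> G 1 0}" by blast
qed

lemma I01_ideal: "lie_ideal scale br {a + b | a b. a \<in> M 0 1 \<and> b \<in> G 0 1}"
  unfolding lie_ideal_def
proof (intro conjI allI impI)
  show "V.subspace {a + b | a b. a \<in> M 0 1 \<and> b \<in> G 0 1}"
  proof (rule V.subspaceI)
    show "0 \<in> {a + b | a b. a \<in> M 0 1 \<and> b \<in> G 0 1}"
      using V.subspace_0[OF M_sub] V.subspace_0[OF G_sub] by force
    fix x y assume "x \<in> {a + b | a b. a \<in> M 0 1 \<and> b \<in> G 0 1}" "y \<in> {a + b | a b. a \<in> M 0 1 \<and> b \<in> G 0 1}"
    then obtain a b a' b' where "x = a + b" "y = a' + b'" "a \<in> M 0 1" "b \<in> G 0 1" "a' \<in> M 0 1" "b' \<in> G 0 1"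
      by blast
    then show "x + y \<in> {a + b | a b. a \<in> M 0 1 \<and> b \<in> G 0 1}"
      using V.subspace_add[OF M_sub] V.subspace_add[OF G_sub]
      by (intro CollectI exI[of _ "a + a'"] exI[of _ "b + b'"]) (simp add: ac_simps)
  next
    fix c x assume "x \<in> {a + b | a b. a \<in> M 0 1 \<and> b \<in> G 0 1}"
    then obtain a b where "x = a + b" "a \<in> M 0 1" "b \<in> G 0 1" by blast
    then show "scale c x \<in> {a + b | a b. a \<in> M 0 1 \<and> b \<in> G 0 1}"
      using V.subspace_scale[OF M_sub] V.subspace_scale[OF G_sub]
      by (intro CollectI exI[of _ "scale c a"] exI[of _ "scale c b"]) (simp add: V.scale_right_distrib)
  qed
next
  fix x i assume "i \<in> {a + b | a b. a \<in> M 0 1 \<and> b \<in> G 0 1}"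
  then obtain a b where i: "i = a + b" and a: "a \<in> M 0 1" and b: "b \<in> G 0 1" by blast
  obtain p q r where x: "x = p + q + r" and p: "p \<in> G 0 0" and q: "q \<in> G 1 0" and r: "r \<in> G 0 1"
    using decomp[of x] by (metis add.assoc add.commute)
  have a0: "a \<in> G 0 0" using M_G00[of 0 1] a by auto
  have 1: "br p a \<in> M 0 1" using G00_M[of 0 1] p a by simp
  have 2: "br p b \<in> G 0 1" using G00_G[of 0 1] p b by simp
  have 3: "br q a = 0" using M01_G10[OF a q] br_anti[of q a] by simp
  have 4: "br q b = 0" using G10_G01[OF q b] .
  have 5: "br r a \<in> G 0 1" using br_G[OF r a0] by simp
  have 6: "br r b \<in> M 0 1" unfolding brk_set_def using r b by (intro V.span_base) blast
  have "br x i = (br p a + br r b) + (br p b + br r a)"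
    unfolding x i br_add_l br_add_r 3 4 by (simp add: ac_simps)
  moreover have "br p a + br r b \<in> M 0 1" using 1 6 V.subspace_add[OF M_sub] by blast
  moreover have "br p b + br r a \<in> G 0 1" using 2 5 V.subspace_add[OF G_sub] by blast
  ultimately show "br x i \<in> {a + b | a b. a \<in> M 0 1 \<and> b \<in> G 0 1}" by blast
qed

lemma K_zero:
  assumes ss: "semisimple scale br"
  shows "M 0 1 \<inter> M 1 0 = {0}"
proof -
  let ?K = "M 0 1 \<inter> M 1 0"
  have sub: "V.subspace ?K" by (intro V.subspace_inter M_sub)
  have id: "lie_ideal scale br ?K"
    unfolding lie_ideal_def
  proof (intro conjI allI impI sub)
    fix x k assume k: "k \<in> ?K"
    obtain p q r where x: "x = p + q + r" and p: "p \<in> G 0 0" and q: "q \<in> G 0 1" and r: "r \<in> G 1 0"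
      using decomp by blast
    have "br q k = 0" using M10_G01[of k q] k q br_anti[of q k] by simp
    moreover have "br r k = 0" using M01_G10[of k r] k r br_anti[of r k] by simp
    moreover have "br p k \<in> ?K" using G00_M[of 0 1 p k] G00_M[of 1 0 p k] p k by simp
    ultimately show "br x k \<in> ?K" unfolding x br_add_l by simp
  qed
  have "derived scale br ?K 1 = {0}"
  proof -
    have "{br a b |a b. a \<in> ?K \<and> b \<in> ?K} \<subseteq> {0}" using M01_M10 by auto
    then have "V.span {br a b |a b. a \<in> ?K \<and> b \<in> ?K} \<subseteq> {0}"
      by (intro V.span_minimal) auto
    then show ?thesis using V.span_zero by (auto simp: brk_set_def)
  qed
  then have "solvable_set scale br ?K" unfolding solvable_set_def by blast
  then show ?thesis using ss id unfolding semisimple_def by blast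
qed

lemma killing_zero:
  assumes a: "a \<in> M 0 1" and b: "b \<in> M 1 0"
  shows "killing scale br a b = 0"
proof -
  have b0: "b \<in> G 0 0" using M_G00[of 1 0] b by auto
  have "br a (br b z) = 0" for z
  proof -
    obtain p q r where z: "z = p + q + r" and p: "p \<in> G 0 0" and q: "q \<in> G 0 1" and r: "r \<in> G 1 0"
      using decomp by blast
    have 1: "br b q = 0" using M10_G01[OF b q] .
    have "br p b \<in> M 1 0" using G00_M[of 1 0 p b] p b by simp
    then have 2: "br a (br b p) = 0" using M01_M10[OF a] br_anti[of b p] by simp
    have "br b r \<in> G 1 0" using br_G[OF b0 r] by simp
    then have 3: "br a (br b r) = 0" using M01_G10[OF a] by simp
    show ?thesis unfolding z br_add_r 1 using 2 3 by simp
  qed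
  then have eq: "(\<lambda>z. br a (br b z)) = (\<lambda>z. 0)" by auto
  show ?thesis
    unfolding killing_def trace_lin_def Let_def eq by (simp add: V.representation_zero)
qed

lemma I_inter:
  assumes ss: "semisimple scale br"
  shows "{a + b | a b. a \<in> M 1 0 \<and> b \<in> G 1 0} \<inter> {a + b | a b. a \<in> M 0 1 \<and> b \<in> G 0 1} = {0}"
proof
  show "{0} \<subseteq> {a + b | a b. a \<in> M 1 0 \<and> b \<in> G 1 0} \<inter> {a + b | a b. a \<in> M 0 1 \<and> b \<in> G 0 1}"
    using V.subspace_0[OF M_sub] V.subspace_0[OF G_sub] by force
  show "{a + b | a b. a \<in> M 1 0 \<and> b \<in> G 1 0} \<inter> {a + b | a b. a \<in> M 0 1 \<and> b \<in> G 0 1} \<subseteq> {0}"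
  proof
    fix z assume "z \<in> {a + b | a b. a \<in> M 1 0 \<and> b \<in> G 1 0} \<inter> {a + b | a b. a \<in> M 0 1 \<and> b \<in> G 0 1}"
    then obtain a b a' b' where z: "z = a + b" "z = a' + b'" and a: "a \<in> M 1 0" and b: "b \<in> G 1 0"
      and a': "a' \<in> M 0 1" and b': "b' \<in> G 0 1" by blast
    have a0: "a \<in> G 0 0" using M_G00[of 1 0] a by auto
    have a0': "a' \<in> G 0 0" using M_G00[of 0 1] a' by auto
    have "\<sigma>1 z = a - b" using z(1) a0 b by (simp add: lin1 gij_def)
    moreover have "\<sigma>1 z = a' + b'" using z(2) a0' b' by (simp add: lin1 gij_def)
    ultimately have "a - b = a + b" using z by simp
    then have "b + b = 0" by (simp add: algebra_simps)
    then have bz: "b = 0" by (rule double0)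
    have "\<sigma>2 z = a + b" using z(1) a0 b by (simp add: lin2 gij_def)
    moreover have "\<sigma>2 z = a' - b'" using z(2) a0' b' by (simp add: lin2 gij_def)
    ultimately have "a' - b' = a' + b'" using z by simp
    then have "b' + b' = 0" by (simp add: algebra_simps)
    then have bz': "b' = 0" by (rule double0)
    have "a = a'" using z bz bz' by simp
    then have "a \<in> M 0 1 \<inter> M 1 0" using a a' by simp
    then have "a = 0" using K_zero[OF ss] by blast
    then show "z \<in> {0}" using z bz by simp
  qed
qed

end

theorem lemma3p1:
  fixes scale :: "'k::field_char_0 \<Rightarrow> 'v::ab_group_add \<Rightarrow> 'v"
    and br :: "'v \<Rightarrow> 'v \<Rightarrow> 'v"
    and \<sigma>1 \<sigma>2 :: "'v \<Rightarrow> 'v"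
  assumes "alg_closed TYPE('k)"
    and "semisimple scale br"
    and "lie_involution scale br \<sigma>1" and "lie_involution scale br \<sigma>2"
    and "\<sigma>1 \<noteq> \<sigma>2"
    and "\<sigma>1 \<circ> \<sigma>2 = \<sigma>2 \<circ> \<sigma>1"
    and "gij \<sigma>1 \<sigma>2 1 1 = {0}"
  shows "let g01 = gij \<sigma>1 \<sigma>2 0 1; g10 = gij \<sigma>1 \<sigma>2 1 0;
             m01 = brk_set scale br g01 g01; m10 = brk_set scale br g10 g10;
             I10 = {a + b | a b. a \<in> m10 \<and> b \<in> g10};
             I01 = {a + b | a b. a \<in> m01 \<and> b \<in> g01}
         in brk_set scale br m01 g10 = {0} \<and> brk_set scale br m10 g01 = {0}
          \<and> (\<forall>a\<in>m01. \<forall>b\<in>m10. killing scale br a b = 0)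
          \<and> m01 \<inter> m10 = {0}
          \<and> m10 \<inter> g10 = {0} \<and> m01 \<inter> g01 = {0}
          \<and> lie_ideal scale br I10 \<and> lie_ideal scale br I01
          \<and> I10 \<inter> I01 = {0}"
proof -
  have lie: "lie_algebra scale br" using assms(2) unfolding semisimple_def by blast
  interpret LS scale br \<sigma>1 \<sigma>2
    by (rule LS.intro[OF lie assms(3) assms(4) assms(6) assms(7)])
  have z1: "brk_set scale br (M 0 1) (G 1 0) = {0}"
  proof -
    have "{br a b |a b. a \<in> M 0 1 \<and> b \<in> G 1 0} \<subseteq> {0}"
    proof
      fix y assume "y \<in> {br a b |a b. a \<in> M 0 1 \<and> b \<in> G 1 0}"
      then obtain a b where "y = br a b" "a \<in> M 0 1" "b \<in> G 1 0" by blast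
      then show "y \<in> {0}" using M01_G10 by simp
    qed
    then have "V.span {br a b |a b. a \<in> M 0 1 \<and> b \<in> G 1 0} \<subseteq> {0}"
      by (intro V.span_minimal) simp_all
    then show ?thesis using V.span_zero by (auto simp: brk_set_def)
  qed
  have z2: "brk_set scale br (M 1 0) (G 0 1) = {0}"
  proof -
    have "{br a b |a b. a \<in> M 1 0 \<and> b \<in> G 0 1} \<subseteq> {0}"
    proof
      fix y assume "y \<in> {br a b |a b. a \<in> M 1 0 \<and> b \<in> G 0 1}"
      then obtain a b where "y = br a b" "a \<in> M 1 0" "b \<in> G 0 1" by blast
      then show "y \<in> {0}" using M10_G01 by simp
    qed
    then have "V.span {br a b |a b. a \<in> M 1 0 \<and> b \<in> G 0 1} \<subseteq> {0}"
      by (intro V.span_minimal) simp_all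
    then show ?thesis using V.span_zero by (auto simp: brk_set_def)
  qed
  have z3: "M 1 0 \<inter> G 1 0 = {0}"
  proof -
    have "x = 0" if "x \<in> M 1 0" "x \<in> G 1 0" for x
    proof -
      have "x \<in> G 0 0" using M_G00[of 1 0] that(1) by auto
      then show ?thesis using G00_G10 that(2) by simp
    qed
    moreover have "0 \<in> M 1 0" "0 \<in> G 1 0" using V.subspace_0[OF M_sub] V.subspace_0[OF G_sub] by auto
    ultimately show ?thesis by auto
  qed
  have z4: "M 0 1 \<inter> G 0 1 = {0}"
  proof -
    have "x = 0" if "x \<in> M 0 1" "x \<in> G 0 1" for x
    proof -
      have "x \<in> G 0 0" using M_G00[of 0 1] that(1) by auto
      then show ?thesis using G00_G01 that(2) by simp
    qed
    moreover have "0 \<in> M 0 1" "0 \<in> G 0 1" using V.subspace_0[OF M_sub] V.subspace_0[OF G_sub] by auto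
    ultimately show ?thesis by auto
  qed
  have kz: "\<forall>a\<in>M 0 1. \<forall>b\<in>M 1 0. killing scale br a b = 0" using killing_zero by blast
  show ?thesis unfolding Let_def
    by (intro conjI z1 z2 z3 z4 kz K_zero[OF assms(2)] I10_ideal I01_ideal I_inter[OF assms(2)])
qed

end
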